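(* Let $f(x)=\frac1n\sum_{i=1}^nf_i(x)$ on $\mathbb{R}$ with $f_i(x)=\frac{a_i}2(x-x_i^* )^2$, $a_i>0$, $x_i^*\in\mathbb{R}$. Consider SGD $x^{k+1}=x^k-\gamma_kf_{i_k}'(x^k)$, where $i_k$ is sampled uniformly from $[n]$ independently at each iteration, with stepsize $\gamma_k=\frac{f_{i_k}(x^k)-f_{i_k}^*}{c_k|f_{i_k}'(x^k)|^2}$ (where $f_i^*=\inf f_i=0$) and $c_k=(k+1)/2$. Then $\mathbb{E}|x^{k+1}-\tilde x|^2=\mathcal O(1/k)$, where $\tilde x=\frac1n\sum_{i=1}^nx_i^*$; in general $\tilde x$ differs from the minimizer $x^*=\frac{\sum_{i=1}^na_ix_i^*}{\sum_{i=1}^na_i}$ of $f$.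
   Context: When $f'_{i_k}(x^k)=0$ the iterate is not updated. *)

theory Defs
  imports "HOL-Analysis.Analysis"
begin

definition fcomp :: "(nat \<Rightarrow> real) \<Rightarrow> (nat \<Rightarrow> real) \<Rightarrow> nat \<Rightarrow> real \<Rightarrow> real" where
  "fcomp a xs i x = a i / 2 * (x - xs i)^2"

definition dfcomp :: "(nat \<Rightarrow> real) \<Rightarrow> (nat \<Rightarrow> real) \<Rightarrow> nat \<Rightarrow> real \<Rightarrow> real" where
  "dfcomp a xs i x = a i * (x - xs i)"

definition fstar :: "(nat \<Rightarrow> real) \<Rightarrow> (nat \<Rightarrow> real) \<Rightarrow> nat \<Rightarrow> real" where
  "fstar a xs i = (INF y. fcomp a xs i y)"

definition cpar :: "nat \<Rightarrow> real" where
  "cpar k = (real k + 1) / 2"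

definition sgd_step :: "(nat \<Rightarrow> real) \<Rightarrow> (nat \<Rightarrow> real) \<Rightarrow> nat \<Rightarrow> nat \<Rightarrow> real \<Rightarrow> real" where
  "sgd_step a xs k i x =
     (if dfcomp a xs i x = 0 then x
      else x - ((fcomp a xs i x - fstar a xs i) / (cpar k * \<bar>dfcomp a xs i x\<bar>^2)) * dfcomp a xs i x)"

fun sgd_iter :: "(nat \<Rightarrow> real) \<Rightarrow> (nat \<Rightarrow> real) \<Rightarrow> real \<Rightarrow> (nat \<Rightarrow> nat) \<Rightarrow> nat \<Rightarrow> real" where
  "sgd_iter a xs x0 I 0 = x0"
| "sgd_iter a xs x0 I (Suc k) = sgd_step a xs k (I k) (sgd_iter a xs x0 I k)"

text \<open>E |x^{k+1} - t|^2 where i_0,...,i_k are i.i.d. uniform on {0..<n}: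
  the average over all n^(k+1) equally likely index sequences.\<close>
definition expected_sq_dist :: "nat \<Rightarrow> (nat \<Rightarrow> real) \<Rightarrow> (nat \<Rightarrow> real) \<Rightarrow> real \<Rightarrow> nat \<Rightarrow> real \<Rightarrow> real" where
  "expected_sq_dist n a xs x0 k t =
     (\<Sum>I \<in> PiE {..k} (\<lambda>_. {..<n}). (sgd_iter a xs x0 I (Suc k) - t)^2) / real n ^ Suc k"

definition xtilde :: "nat \<Rightarrow> (nat \<Rightarrow> real) \<Rightarrow> real" where
  "xtilde n xs = (\<Sum>i<n. xs i) / real n"

definition xstar :: "nat \<Rightarrow> (nat \<Rightarrow> real) \<Rightarrow> (nat \<Rightarrow> real) \<Rightarrow> real" where
  "xstar n a xs = (\<Sum>i<n. a i * xs i) / (\<Sum>i<n. a i)"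

end

theory Submission
  imports Defs
begin

lemma sum_PiE_insert':
  assumes "x \<notin> S" "finite S" "\<And>i. finite (T i)"
  shows "(\<Sum>I\<in>PiE (insert x S) T. h I) = (\<Sum>g\<in>PiE S T. \<Sum>y\<in>T x. h (g(x := y)))"
proof -
  have "(\<Sum>I\<in>PiE (insert x S) T. h I) = (\<Sum>p\<in>T x \<times> PiE S T. h ((\<lambda>(y, g). g(x := y)) p))"
    unfolding PiE_insert_eq by (subst sum.reindex[OF inj_combinator[OF assms(1)]]) (simp add: o_def)
  also have "\<dots> = (\<Sum>y\<in>T x. \<Sum>g\<in>PiE S T. h (g(x := y)))"
    by (simp add: sum.cartesian_product split_def)
  also have "\<dots> = (\<Sum>g\<in>PiE S T. \<Sum>y\<in>T x. h (g(x := y)))"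
    by (rule sum.swap)
  finally show ?thesis .
qed

lemma fstar_zero: assumes "a i \<ge> 0" shows "fstar a xs i = 0"
proof -
  have "(INF y. fcomp a xs i y) = fcomp a xs i (xs i)"
    by (rule cInf_eq_minimum) (auto simp: fcomp_def assms)
  thus ?thesis by (simp add: fstar_def fcomp_def)
qed

lemma step_alg:
  fixes A d c :: real assumes "A > 0" "d \<noteq> 0" "c > 0"
  shows "(A / 2 * d^2 - 0) / (c * \<bar>A * d\<bar>^2) * (A * d) = d / (2 * c)"
  using assms by (simp add: power2_eq_square field_simps)

lemma step_eq: assumes "a i > 0"
  shows "sgd_step a xs k i x = x - (x - xs i) / (real k + 1)"
proof (cases "x = xs i")
  case True thus ?thesis by (simp add: sgd_step_def dfcomp_def)
next
  case False
  hence ne: "x - xs i \<noteq> 0" by simp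
  have c: "cpar k > 0" by (simp add: cpar_def)
  have "(fcomp a xs i x - fstar a xs i) / (cpar k * \<bar>dfcomp a xs i x\<bar>^2) * dfcomp a xs i x
     = (x - xs i) / (2 * cpar k)"
    unfolding fstar_zero[of a i xs, OF less_imp_le[OF assms]] fcomp_def dfcomp_def
    by (rule step_alg[OF assms ne c])
  also have "2 * cpar k = real k + 1" by (simp add: cpar_def)
  finally show ?thesis using False assms by (simp add: sgd_step_def dfcomp_def)
qed

lemma sum_sq_expand:
  fixes c y D :: real and e :: "nat \<Rightarrow> real"
  shows "(\<Sum>i<n. ((c*y + e i)/D)^2) = (real n * c^2 * y^2 + 2*c*y*(\<Sum>i<n. e i) + (\<Sum>i<n. (e i)^2))/D^2"
proof -
  have "(\<Sum>i<n. ((c*y + e i)/D)^2) = (\<Sum>i<n. ((c*y)^2 + 2*c*y*e i + (e i)^2)/D^2)"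
    by (intro sum.cong refl) (simp add: power_divide power2_sum algebra_simps)
  also have "\<dots> = (\<Sum>i<n. ((c*y)^2 + 2*c*y*e i + (e i)^2))/D^2"
    by (simp add: sum_divide_distrib)
  also have "(\<Sum>i<n. ((c*y)^2 + 2*c*y*e i + (e i)^2)) = real n * c^2 * y^2 + 2*c*y*(\<Sum>i<n. e i) + (\<Sum>i<n. (e i)^2)"
    by (simp add: sum.distrib sum_distrib_left power_mult_distrib)
  finally show ?thesis .
qed

lemma iter_local: "(\<forall>j<m. I j = J j) \<Longrightarrow> sgd_iter a xs x0 I m = sgd_iter a xs x0 J m"
  by (induction m) auto

theorem proposition4:
  fixes n :: nat and a xs :: "nat \<Rightarrow> real" and x0 :: real
  assumes "n \<ge> 1" and "\<And>i. i < n \<Longrightarrow> a i > 0"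
  shows "(\<exists>C. \<forall>k\<ge>1. expected_sq_dist n a xs x0 k (xtilde n xs) \<le> C / real k)
    \<and> (\<exists>(m::nat) (b::nat \<Rightarrow> real) ys. m \<ge> 1 \<and> (\<forall>i<m. b i > 0) \<and> xtilde m ys \<noteq> xstar m b ys)"
proof
  define t where "t = xtilde n xs"
  define V where "V = (\<Sum>i<n. (xs i - t)^2)"
  define S where "S k = (\<Sum>I \<in> PiE {..k} (\<lambda>_. {..<n}). (sgd_iter a xs x0 I (Suc k) - t)^2)" for k
  have zero: "(\<Sum>i<n. (xs i - t)) = 0"
    using assms(1) by (simp add: t_def xtilde_def sum_subtractf)
  have Sk: "S k * (real k + 1) = real n ^ k * V" for k
  proof (induction k)
    case 0
    have "S 0 = (\<Sum>g\<in>PiE {} (\<lambda>_. {..<n}). \<Sum>y<n. (sgd_iter a xs x0 (g(0 := y)) 1 - t)^2)"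
      unfolding S_def by (subst atMost_0, subst sum_PiE_insert') auto
    also have "\<dots> = V" using assms(2) by (simp add: V_def step_eq)
    finally show ?case by simp
  next
    case (Suc k)
    let ?y = "\<lambda>I. sgd_iter a xs x0 I (Suc k) - t"
    have "S (Suc k) = (\<Sum>g\<in>PiE {..k} (\<lambda>_. {..<n}). \<Sum>i<n.
         (sgd_iter a xs x0 (g(Suc k := i)) (Suc (Suc k)) - t)^2)"
      unfolding S_def by (subst atMost_Suc, subst sum_PiE_insert') auto
    also have "\<dots> = (\<Sum>g\<in>PiE {..k} (\<lambda>_. {..<n}). \<Sum>i<n.
         (((real k + 1) * ?y g + (xs i - t)) / (real k + 2))^2)"
    proof (intro sum.cong refl)
      fix g i assume "i \<in> {..<n}"
      hence ai: "a i > 0" using assms(2) by simp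
      have loc: "sgd_iter a xs x0 (g(Suc k := i)) (Suc k) = sgd_iter a xs x0 g (Suc k)"
        by (rule iter_local) auto
      show "(sgd_iter a xs x0 (g(Suc k := i)) (Suc (Suc k)) - t)^2 =
         (((real k + 1) * ?y g + (xs i - t)) / (real k + 2))^2"
        unfolding sgd_iter.simps(2)[of _ _ _ _ "Suc k"] fun_upd_same loc
        using ai by (simp only: step_eq) (simp add: field_simps)
    qed
    also have "\<dots> = (\<Sum>g\<in>PiE {..k} (\<lambda>_. {..<n}).
         (real n * (real k + 1)^2 * (?y g)^2 + 2 * (real k + 1) * ?y g * (\<Sum>i<n. (xs i - t)) + V)
          / (real k + 2)^2)"
      by (intro sum.cong refl) (simp only: sum_sq_expand V_def)
    also have "\<dots> = (real n * (real k + 1)^2 * S k + card (PiE {..k} (\<lambda>_. {..<n})) * V) / (real k + 2)^2"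
      by (simp add: zero S_def sum_divide_distrib[symmetric] sum.distrib sum_distrib_left)
    also have "card (PiE {..k} (\<lambda>_. {..<n})) = n ^ Suc k"
      by (simp add: card_PiE)
    finally have eq: "S (Suc k) = (real n * (real k + 1)^2 * S k + real n ^ Suc k * V) / (real k + 2)^2"
      by simp
    have "real n * (real k + 1)^2 * S k = real n ^ Suc k * V * (real k + 1)"
    proof -
      have "real n * (real k + 1)^2 * S k = real n * (real k + 1) * (S k * (real k + 1))"
        by (simp add: power2_eq_square algebra_simps)
      also have "\<dots> = real n ^ Suc k * V * (real k + 1)" using Suc.IH by simp
      finally show ?thesis .
    qed
    hence "S (Suc k) = real n ^ Suc k * V * (real k + 2) / (real k + 2)^2"
      unfolding eq by (simp add: algebra_simps)
    also have "\<dots> = real n ^ Suc k * V / (real k + 2)"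
      by (simp add: power2_eq_square)
    finally have "S (Suc k) = real n ^ Suc k * V / (real k + 2)" .
    moreover have "real k + 2 \<noteq> 0" by simp
    ultimately show ?case by (simp add: field_simps)
  qed
  have Vnn: "V \<ge> 0" unfolding V_def by (simp add: sum_nonneg)
  show "\<exists>C. \<forall>k\<ge>1. expected_sq_dist n a xs x0 k (xtilde n xs) \<le> C / real k"
  proof (intro exI allI impI)
    fix k :: nat assume k: "k \<ge> 1"
    have n0: "real n > 0" using assms(1) by simp
    have "expected_sq_dist n a xs x0 k (xtilde n xs) = S k / real n ^ Suc k"
      by (simp add: expected_sq_dist_def S_def t_def)
    also have "\<dots> = V / real n / (real k + 1)"
    proof -
      have k1: "real k + 1 \<noteq> 0" by simp
      have "real n ^ k > 0" using n0 by simp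
      hence nk: "real n ^ k \<noteq> 0" by simp
      have Se: "S k = real n ^ k * V / (real k + 1)"
        using Sk[of k] k1 by (simp add: eq_divide_eq)
      have "real n ^ k * V / (real k + 1) / real n ^ Suc k = V / real n / (real k + 1)"
      proof -
        have "real n ^ k * V / (real k + 1) / real n ^ Suc k
           = (real n ^ k / real n ^ k) * (V / real n / (real k + 1))"
          by (simp add: power_Suc)
        thus ?thesis using nk by simp
      qed
      thus ?thesis by (simp only: Se)
    qed
    also have "\<dots> \<le> V / real n / real k"
      using k n0 Vnn by (intro divide_left_mono) auto
    finally show "expected_sq_dist n a xs x0 k (xtilde n xs) \<le> V / real n / real k" .
  qed
next
  show "\<exists>(m::nat) (b::nat \<Rightarrow> real) ys. m \<ge> 1 \<and> (\<forall>i<m. b i > 0) \<and> xtilde m ys \<noteq> xstar m b ys"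
    by (rule exI[of _ 2], rule exI[of _ "\<lambda>i. real i + 1"], rule exI[of _ real])
       (simp add: xtilde_def xstar_def numeral_2_eq_2)
qed

end
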